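(* For nonnegative integers $p,q$, $G_2(p,q)=\binom{p+q+1}{q}\zeta(p+q+2)$, and if moreover $q\ge1$, then also $G_2(p,q)=G_2(q-1,p+1)$.
   Context: $\zeta(s)$ is the Riemann zeta function. For nonnegative integers $n,p,q$, $$G_{n+2}(p,q)=\sum_{1\le k_1<\cdots<k_{p+1}}\frac{1}{k_1\cdots k_p\,k_{p+1}^{n+2}}\sum_{1\le \ell_1\le\cdots\le\ell_q\le k_{p+1}}\frac{1}{\ell_1\cdots\ell_q}.$$ *)

theory Defs
  imports "HOL-Analysis.Analysis"
begin

text \<open>Riemann zeta at an integer argument s (meaningful for s >= 2):
  zeta(s) = sum over m >= 1 of 1/m^s.\<close>
definition rzeta :: "nat \<Rightarrow> real" where
  "rzeta s = (\<Sum>m. 1 / (real (Suc m)) ^ s)"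

definition Hsum :: "nat \<Rightarrow> nat \<Rightarrow> real" where
  "Hsum q m = (\<Sum>ls\<in>{ls. length ls = q \<and> sorted ls \<and> set ls \<subseteq> {1..m}}.
                  1 / (\<Prod>l\<leftarrow>ls. real l))"

definition Gidx :: "nat \<Rightarrow> nat list set" where
  "Gidx p = {ks. length ks = Suc p \<and> sorted_wrt (<) ks \<and> 0 \<notin> set ks}"

definition Gterm :: "nat \<Rightarrow> nat \<Rightarrow> nat list \<Rightarrow> real" where
  "Gterm n q ks = 1 / (\<Prod>k\<leftarrow>butlast ks. real k) / (real (last ks)) ^ (n + 2)
                    * Hsum q (last ks)"

text \<open>G n p q stands for the paper's G_{n+2}(p,q).\<close>
definition G :: "nat \<Rightarrow> nat \<Rightarrow> nat \<Rightarrow> real" where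
  "G n p q = (\<Sum>\<^sub>\<infinity>ks\<in>Gidx p. Gterm n q ks)"

end

theory Submission
  imports Defs "HOL-Real_Asymp.Real_Asymp"
begin

fun Dc :: "nat \<Rightarrow> nat \<Rightarrow> nat \<Rightarrow> real" where
  "Dc r 0 n = (if r = 0 then 1 else 0)"
| "Dc 0 (Suc k) n = real (Suc k) * Dc 0 k n / real (Suc k + n)"
| "Dc (Suc r) (Suc k) n = (real (Suc k) * Dc (Suc r) k n + Dc r (Suc k) n) / real (Suc k + n)"

fun Uop :: "nat \<Rightarrow> (nat \<Rightarrow> real) \<Rightarrow> nat \<Rightarrow> real" where
  "Uop n X 0 = X 0 / real n"
| "Uop n X (Suc r) = (X (Suc r) + Uop n X r) / real n"

definition U :: "nat \<Rightarrow> nat \<Rightarrow> nat \<Rightarrow> real" where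
  "U r k n = Uop n (\<lambda>s. Dc s k n) r"

lemma Dc_nonneg: "Dc r k n \<ge> 0"
  by (induction r k n rule: Dc.induct) auto

lemma Uop_nonneg: "(\<And>s. X s \<ge> 0) \<Longrightarrow> Uop n X r \<ge> 0"
  by (induction r) auto

lemma Dc_rec0: "real (Suc k + n) * Dc 0 (Suc k) n = real (Suc k) * Dc 0 k n"
  by simp

lemma Dc_recS: "real (Suc k + n) * Dc (Suc r) (Suc k) n = real (Suc k) * Dc (Suc r) k n + Dc r (Suc k) n"
  by simp

declare Dc.simps(2,3)[simp del]

lemma Uop_recS: "n > 0 \<Longrightarrow> real n * Uop n X (Suc r) = X (Suc r) + Uop n X r"
  by simp

lemma Uop_rec0: "n > 0 \<Longrightarrow> real n * Uop n X 0 = X 0"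
  by simp

lemma L_A:
  assumes n: "n > 0"
  shows "Dc r (Suc k) n = real (Suc k) * (U r k n - U r (Suc k) n)"
proof (induction r)
  case 0
  have "real (Suc k + n) * Dc 0 (Suc k) n = real (Suc k) * Dc 0 k n" by (rule Dc_rec0)
  then have "real n * Dc 0 (Suc k) n = real (Suc k) * (Dc 0 k n - Dc 0 (Suc k) n)"
    by (simp add: algebra_simps)
  then show ?case using n unfolding U_def by (simp add: field_simps)
next
  case (Suc r)
  have e: "real (Suc k + n) * Dc (Suc r) (Suc k) n = real (Suc k) * Dc (Suc r) k n + Dc r (Suc k) n"
    by (rule Dc_recS)
  have "real (Suc k) * (U (Suc r) k n - U (Suc r) (Suc k) n)
     = (real (Suc k) * (Dc (Suc r) k n - Dc (Suc r) (Suc k) n) + real (Suc k) * (U r k n - U r (Suc k) n)) / real n"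
    using n unfolding U_def by (simp add: field_simps)
  also have "\<dots> = (real (Suc k) * (Dc (Suc r) k n - Dc (Suc r) (Suc k) n) + Dc r (Suc k) n) / real n"
    using Suc by simp
  also have "\<dots> = Dc (Suc r) (Suc k) n"
    using e n by (simp add: field_simps)
  finally show ?case by simp
qed

lemma alg_L1:
  fixes X A B U' Dk b m :: real
  assumes "(b + 1 + m) * X = (b + 1) * (b * A) + (b + 1) * U'"
    "(m + 1) * B = Dk + U'" "Dk = b * (A - B)" "b + 1 + m \<noteq> 0"
  shows "X = (b + 1) * B"
proof -
  have "(b + 1 + m) * X = (b + 1 + m) * ((b + 1) * B)"
    using assms(1-3) by algebra
  then show ?thesis using assms(4) by simp
qed

lemma L1_base: "Dc r (Suc 0) n = U r 0 (Suc n)"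
proof (induction r)
  case 0
  then show ?case unfolding U_def by (simp add: Dc.simps(2))
next
  case (Suc r)
  then show ?case unfolding U_def by (simp add: Dc.simps(3))
qed

lemma L1: "Dc r (Suc k) n = real (Suc k) * U r k (Suc n)"
proof (induction k arbitrary: r n)
  case 0
  then show ?case using L1_base by simp
next
  case (Suc k)
  note IHk = Suc.IH
  show ?case
  proof (induction r)
    case 0
    have rec: "real (Suc (Suc k) + n) * Dc 0 (Suc (Suc k)) n = real (Suc (Suc k)) * Dc 0 (Suc k) n"
      by (rule Dc_rec0)
    have ih: "Dc 0 (Suc k) n = real (Suc k) * U 0 k (Suc n)" by (rule IHk)
    have la: "Dc 0 (Suc k) (Suc n) = real (Suc k) * (U 0 k (Suc n) - U 0 (Suc k) (Suc n))"
      by (rule L_A) simp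
    have ur: "real (Suc n) * U 0 (Suc k) (Suc n) = Dc 0 (Suc k) (Suc n) + 0"
      unfolding U_def by simp
    have "Dc 0 (Suc (Suc k)) n = (real (Suc k) + 1) * U 0 (Suc k) (Suc n)"
      by (rule alg_L1[where A = "U 0 k (Suc n)" and U' = 0 and Dk = "Dc 0 (Suc k) (Suc n)" and m = "real n"])
         (use rec ih la ur in \<open>simp_all add: algebra_simps\<close>)
    then show ?case by simp
  next
    case (Suc r)
    have rec: "real (Suc (Suc k) + n) * Dc (Suc r) (Suc (Suc k)) n = real (Suc (Suc k)) * Dc (Suc r) (Suc k) n + Dc r (Suc (Suc k)) n"
      by (rule Dc_recS)
    have ih: "Dc (Suc r) (Suc k) n = real (Suc k) * U (Suc r) k (Suc n)" by (rule IHk)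
    have la: "Dc (Suc r) (Suc k) (Suc n) = real (Suc k) * (U (Suc r) k (Suc n) - U (Suc r) (Suc k) (Suc n))"
      by (rule L_A) simp
    have ur: "real (Suc n) * U (Suc r) (Suc k) (Suc n) = Dc (Suc r) (Suc k) (Suc n) + U r (Suc k) (Suc n)"
      unfolding U_def by (rule Uop_recS) simp
    have "Dc (Suc r) (Suc (Suc k)) n = (real (Suc k) + 1) * U (Suc r) (Suc k) (Suc n)"
      by (rule alg_L1[where A = "U (Suc r) k (Suc n)" and U' = "U r (Suc k) (Suc n)" and Dk = "Dc (Suc r) (Suc k) (Suc n)" and m = "real n"])
         (use rec ih la ur Suc.IH in \<open>simp_all add: algebra_simps\<close>)
    then show ?case by simp
  qed
qed

lemma tele_n: "real (Suc k) * U r (Suc k) (Suc n) = Dc r (Suc k) n - Dc r (Suc k) (Suc n)"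
proof -
  have la: "Dc r (Suc k) (Suc n) = real (Suc k) * (U r k (Suc n) - U r (Suc k) (Suc n))"
    by (rule L_A) simp
  show ?thesis using la L1[of r k n] by (simp add: algebra_simps)
qed

fun Q :: "nat \<Rightarrow> nat \<Rightarrow> real" where
  "Q 0 n = 1"
| "Q (Suc k) n = Q k n * real (Suc k) / (real (Suc k) + real n - 1/2)"

lemma Q_pos: "Q k n > 0"
  by (induction k) auto

declare Q.simps(2)[simp del]

lemma Q_Suc: "Q (Suc k) n * (real (Suc k) + real n - 1/2) = Q k n * real (Suc k)"
  by (simp add: Q.simps)

lemma alg_b1: fixes q a m c :: real assumes "a + m > 0"
  shows "(2 * c * (q * (a + m - 1/2)) + c * q) / (a + m) = 2 * c * q"
  using assms by (simp add: field_simps)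

lemma Dc_bound: "Dc r k n \<le> 2 ^ r * Q k n"
proof (induction r k n rule: Dc.induct)
  case (1 r n)
  then show ?case by simp
next
  case (2 k n)
  have q: "Q k n > 0" by (rule Q_pos)
  have qs: "Q (Suc k) n = Q k n * real (Suc k) / (real (Suc k) + real n - 1/2)"
    by (simp add: Q.simps)
  have "Dc 0 (Suc k) n = real (Suc k) * Dc 0 k n / real (Suc k + n)" by (simp add: Dc.simps)
  also have "\<dots> \<le> real (Suc k) * Q k n / real (Suc k + n)"
    using 2 by (intro divide_right_mono mult_left_mono) auto
  also have "\<dots> \<le> real (Suc k) * Q k n / (real (Suc k) + real n - 1/2)"
    using q by (intro divide_left_mono) auto
  finally show ?case by (simp add: qs mult.commute)
next
  case (3 r k n)
  have q: "Q k n > 0" by (rule Q_pos)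
  have qs: "Q (Suc k) n * (real (Suc k) + real n - 1/2) = Q k n * real (Suc k)"
    by (rule Q_Suc)
  have "Dc (Suc r) (Suc k) n = (real (Suc k) * Dc (Suc r) k n + Dc r (Suc k) n) / real (Suc k + n)"
    by (simp add: Dc.simps)
  also have "\<dots> \<le> (real (Suc k) * (2 ^ Suc r * Q k n) + 2 ^ r * Q (Suc k) n) / real (Suc k + n)"
    using 3 by (intro divide_right_mono add_mono mult_left_mono) auto
  also have "real (Suc k) * (2 ^ Suc r * Q k n) = 2 ^ Suc r * (Q (Suc k) n * (real (Suc k) + real n - 1/2))"
    using qs by (simp add: algebra_simps)
  also have "(2 ^ Suc r * (Q (Suc k) n * (real (Suc k) + real n - 1/2)) + 2 ^ r * Q (Suc k) n) / real (Suc k + n)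
      = 2 ^ Suc r * Q (Suc k) n"
    using alg_b1[where a="real (Suc k)" and m="real n" and q="Q (Suc k) n" and c="2^r"] by (simp add: ac_simps)
  finally show ?case .
qed

lemma Q_sq_bound: "n \<ge> 1 \<Longrightarrow> (Q k n)^2 \<le> 1 / (real k + 1)"
proof (induction k)
  case 0
  then show ?case by simp
next
  case (Suc k)
  have q: "Q k n > 0" by (rule Q_pos)
  have d: "real (Suc k) + real n - 1/2 \<ge> real k + 3/2" using Suc.prems by simp
  have "(Q (Suc k) n)^2 = (Q k n)^2 * (real (Suc k))^2 / (real (Suc k) + real n - 1/2)^2"
    by (simp add: Q.simps power_mult_distrib power_divide)
  also have "\<dots> \<le> (1 / (real k + 1)) * (real (Suc k))^2 / (real k + 3/2)^2"
    using Suc q d by (intro divide_mono mult_right_mono power_mono) auto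
  also have "\<dots> = (real k + 1) / (real k + 3/2)^2"
  proof -
    have "(1 / (real k + 1)) * (real (Suc k))^2 = real k + 1" by (simp add: power2_eq_square field_simps)
    then show ?thesis by simp
  qed
  also have "\<dots> \<le> 1 / (real (Suc k) + 1)"
  proof -
    have p: "0 < (real k + 3/2)^2" by simp
    have "(real k + 1) * (real (Suc k) + 1) \<le> 1 * (real k + 3/2)^2"
      by (simp add: power2_eq_square algebra_simps)
    then have "(real k + 1) * (real (Suc k) + 1) / ((real k + 3/2)^2 * (real (Suc k) + 1))
       \<le> (real k + 3/2)^2 / ((real k + 3/2)^2 * (real (Suc k) + 1))"
      by (intro divide_right_mono) auto
    then show ?thesis using p by simp
  qed
  finally show ?case .
qed

lemma Dc_lim_k: assumes "n \<ge> 1" shows "(\<lambda>k. Dc r k n) \<longlonglongrightarrow> 0"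
proof (rule tendsto_sandwich[where f = "\<lambda>_. 0" and h = "\<lambda>k. 2 ^ r * sqrt (1 / (real k + 1))"])
  show "\<forall>\<^sub>F k in sequentially. 0 \<le> Dc r k n" by (simp add: Dc_nonneg)
  show "\<forall>\<^sub>F k in sequentially. Dc r k n \<le> 2 ^ r * sqrt (1 / (real k + 1))"
  proof (intro always_eventually allI)
    fix k
    have "Q k n = sqrt ((Q k n)^2)" using Q_pos[of k n] by simp
    also have "\<dots> \<le> sqrt (1 / (real k + 1))" using Q_sq_bound[OF assms] by (rule real_sqrt_le_mono)
    finally have "Q k n \<le> sqrt (1 / (real k + 1))" .
    then show "Dc r k n \<le> 2 ^ r * sqrt (1 / (real k + 1))"
      using Dc_bound[of r k n] by (meson mult_left_mono order_trans zero_le_numeral zero_le_power)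
  qed
  show "(\<lambda>k. 2 ^ r * sqrt (1 / (real k + 1))) \<longlonglongrightarrow> 0" by real_asymp
qed auto

lemma Q_n_bound: "n \<ge> 1 \<Longrightarrow> Q (Suc k) n \<le> 1 / (real n + 1/2)"
proof (induction k)
  case 0
  then show ?case by (simp add: Q.simps field_simps)
next
  case (Suc k)
  have q: "Q (Suc k) n > 0" by (rule Q_pos)
  have "Q (Suc (Suc k)) n = Q (Suc k) n * (real (Suc (Suc k)) / (real (Suc (Suc k)) + real n - 1/2))"
    by (simp add: Q.simps)
  also have "\<dots> \<le> Q (Suc k) n * 1"
    using q Suc.prems by (intro mult_left_mono) auto
  finally show ?case using Suc by simp
qed

lemma Dc_lim_n: "(\<lambda>n. Dc r (Suc k) n) \<longlonglongrightarrow> 0"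
proof (rule tendsto_sandwich[where f = "\<lambda>_. 0" and h = "\<lambda>n. 2 ^ r * (1 / (real n + 1/2))"])
  show "\<forall>\<^sub>F n in sequentially. 0 \<le> Dc r (Suc k) n" by (simp add: Dc_nonneg)
  show "\<forall>\<^sub>F n in sequentially. Dc r (Suc k) n \<le> 2 ^ r * (1 / (real n + 1/2))"
    using eventually_ge_at_top[of "1::nat"]
  proof eventually_elim
    case (elim n)
    show ?case using Dc_bound[of r "Suc k" n] Q_n_bound[OF elim, of k]
      by (meson mult_left_mono order_trans zero_le_numeral zero_le_power)
  qed
  show "(\<lambda>n. 2 ^ r * (1 / (real n + 1/2))) \<longlonglongrightarrow> 0" by real_asymp
qed auto


lemma sums_to_has_sum_shift:
  fixes f :: "nat \<Rightarrow> real"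
  assumes "(\<lambda>i. f (Suc (a + i))) sums S" "\<And>k. k > a \<Longrightarrow> f k \<ge> 0"
  shows "(f has_sum S) {a<..}"
proof -
  have "((\<lambda>i. f (Suc (a + i))) has_sum S) UNIV"
    using assms by (intro sums_nonneg_imp_has_sum) auto
  moreover have "((\<lambda>i. f (Suc (a + i))) has_sum S) UNIV = (f has_sum S) {a<..}"
    by (rule has_sum_reindex_bij_witness[where i = "\<lambda>k. k - Suc a" and j = "\<lambda>i. Suc (a + i)"]) auto
  ultimately show ?thesis by simp
qed

lemma U_nonneg: "U r k n \<ge> 0"
  unfolding U_def by (rule Uop_nonneg) (rule Dc_nonneg)

lemma U_lim: assumes "n \<ge> 1" shows "(\<lambda>k. U r k n) \<longlonglongrightarrow> 0"
proof (induction r)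
  case 0
  then show ?case unfolding U_def using Dc_lim_k[OF assms, of 0]
    by (simp add: tendsto_divide_zero)
next
  case (Suc r)
  then show ?case unfolding U_def using Dc_lim_k[OF assms, of "Suc r"]
    by (simp add: tendsto_divide_zero tendsto_add_zero)
qed

lemma TA0:
  assumes n: "n \<ge> 1"
  shows "((\<lambda>k. Dc r k n / real k) has_sum U r a n) {a<..}"
proof (rule sums_to_has_sum_shift)
  have lim: "(\<lambda>i. U r (a + i) n) \<longlonglongrightarrow> 0"
    using LIMSEQ_ignore_initial_segment[OF U_lim[OF n, of r], of a] by (simp add: add.commute)
  have "(\<lambda>i. U r (a + i) n - U r (Suc (a + i)) n) sums (U r (a + 0) n - 0)"
    using telescope_sums'[OF lim] by simp
  moreover have "U r (a + i) n - U r (Suc (a + i)) n = Dc r (Suc (a + i)) n / real (Suc (a + i))" for i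
    using L_A[of n r "a + i"] n by (simp add: field_simps)
  ultimately show "(\<lambda>i. Dc r (Suc (a + i)) n / real (Suc (a + i))) sums U r a n" by simp
  show "\<And>k. a < k \<Longrightarrow> 0 \<le> Dc r k n / real k" by (simp add: Dc_nonneg)
qed

lemma TB: "((\<lambda>n. U r (Suc k) n) has_sum Dc r (Suc k) 0 / real (Suc k)) {0<..}"
proof (rule sums_to_has_sum_shift)
  have "(\<lambda>i. Dc r (Suc k) i - Dc r (Suc k) (Suc i)) sums (Dc r (Suc k) 0 - 0)"
    by (rule telescope_sums'[OF Dc_lim_n])
  then have "(\<lambda>i. (Dc r (Suc k) i - Dc r (Suc k) (Suc i)) / real (Suc k)) sums (Dc r (Suc k) 0 / real (Suc k))"
    using sums_divide by fastforce
  moreover have "(Dc r (Suc k) i - Dc r (Suc k) (Suc i)) / real (Suc k) = U r (Suc k) (Suc (0 + i))" for i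
    using tele_n[of k r i] by (simp add: field_simps)
  ultimately show "(\<lambda>i. U r (Suc k) (Suc (0 + i))) sums (Dc r (Suc k) 0 / real (Suc k))" by simp
  show "\<And>n. 0 < n \<Longrightarrow> 0 \<le> U r (Suc k) n" by (rule U_nonneg)
qed

lemma Uop_has_sum:
  assumes "\<And>s. ((\<lambda>k. X k s) has_sum Y s) A"
  shows "((\<lambda>k. Uop n (X k) r) has_sum Uop n Y r) A"
proof (induction r)
  case 0
  then show ?case using has_sum_divide_const[OF assms[of 0]] by simp
next
  case (Suc r)
  then show ?case using has_sum_divide_const[OF has_sum_add[OF assms[of "Suc r"] Suc]] by simp
qed

lemma Uop_div: "Uop n (\<lambda>s. X s / c) r = Uop n X r / c"
  by (induction r) (simp_all add: add_divide_distrib mult.commute)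

lemma Uopp_div: "(Uop n ^^ m) (\<lambda>s. X s / c) r = (Uop n ^^ m) X r / c"
proof (induction m arbitrary: r)
  case 0
  then show ?case by simp
next
  case (Suc m)
  have "(Uop n ^^ Suc m) (\<lambda>s. X s / c) = Uop n ((Uop n ^^ m) (\<lambda>s. X s / c))" by simp
  also have "(Uop n ^^ m) (\<lambda>s. X s / c) = (\<lambda>s. (Uop n ^^ m) X s / c)" using Suc by auto
  finally show ?case by (simp add: Uop_div)
qed

lemma Uopp_nonneg: "(\<And>s. X s \<ge> 0) \<Longrightarrow> (Uop n ^^ m) X r \<ge> 0"
proof (induction m arbitrary: r)
  case 0
  then show ?case by simp
next
  case (Suc m)
  then show ?case by (simp add: Uop_nonneg)
qed

lemma TA:
  assumes n: "n \<ge> 1"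
  shows "((\<lambda>k. (Uop n ^^ m) (\<lambda>s. Dc s k n) r / real k) has_sum (Uop n ^^ Suc m) (\<lambda>s. Dc s a n) r) {a<..}"
proof (induction m arbitrary: r)
  case 0
  then show ?case using TA0[OF n] unfolding U_def by simp
next
  case (Suc m)
  have "((\<lambda>k. Uop n (\<lambda>s. (Uop n ^^ m) (\<lambda>s. Dc s k n) s / real k) r) has_sum
         Uop n ((Uop n ^^ Suc m) (\<lambda>s. Dc s a n)) r) {a<..}"
    by (rule Uop_has_sum) (rule Suc)
  then show ?case by (simp add: Uop_div)
qed

lemma Wfin: "(Uop n ^^ Suc m) (\<lambda>s. Dc s 0 n) r = real ((r + m) choose r) / real n ^ (r + m + 1)"
proof (induction m arbitrary: r)
  case 0
  show ?case
  proof (induction r)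
    case 0
    then show ?case by simp
  next
    case (Suc r)
    then show ?case by simp
  qed
next
  case (Suc m)
  note IHm = Suc.IH
  have e: "(Uop n ^^ Suc (Suc m)) (\<lambda>s. Dc s 0 n) = Uop n ((Uop n ^^ Suc m) (\<lambda>s. Dc s 0 n))" by simp
  show ?case unfolding e
  proof (induction r)
    case 0
    then show ?case using IHm[of 0] by simp
  next
    case (Suc r)
    have "Uop n ((Uop n ^^ Suc m) (\<lambda>s. Dc s 0 n)) (Suc r)
      = (real ((Suc r + m) choose Suc r) / real n ^ (Suc r + m + 1) + real ((r + Suc m) choose r) / real n ^ (r + Suc m + 1)) / real n"
      using IHm[of "Suc r"] Suc by simp
    also have "\<dots> = real ((Suc r + Suc m) choose Suc r) / real n ^ (Suc r + Suc m + 1)"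
      by (simp add: add_divide_distrib ac_simps)
    finally show ?case .
  qed
qed


lemma has_sum_Sigma_nonneg:
  fixes f :: "'a \<times> 'b \<Rightarrow> real"
  assumes "\<And>x. x \<in> A \<Longrightarrow> ((\<lambda>y. f (x, y)) has_sum g x) (B x)" "(g has_sum S) A"
    "\<And>x y. x \<in> A \<Longrightarrow> y \<in> B x \<Longrightarrow> f (x, y) \<ge> 0"
  shows "(f has_sum S) (Sigma A B)"
proof -
  have "f summable_on Sigma A B"
    by (rule summable_on_SigmaI[where g = g]) (use assms in \<open>auto intro: has_sum_imp_summable\<close>)
  then show ?thesis
    by (intro has_sum_SigmaI[where g = g]) (use assms in auto)
qed

lemma has_sum_swap_nonneg:
  fixes f :: "'a \<Rightarrow> 'b \<Rightarrow> real"
  assumes inner1: "\<And>x. x \<in> A \<Longrightarrow> ((\<lambda>y. f x y) has_sum g x) (B x)"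
    and outer: "(g has_sum S) A"
    and nonneg: "\<And>x y. x \<in> A \<Longrightarrow> y \<in> B x \<Longrightarrow> f x y \<ge> 0"
    and inner2: "\<And>y. y \<in> C \<Longrightarrow> ((\<lambda>x. f x y) has_sum h y) (D y)"
    and eq: "\<And>x y. (x \<in> A \<and> y \<in> B x) \<longleftrightarrow> (y \<in> C \<and> x \<in> D y)"
  shows "(h has_sum S) C"
proof -
  have "((\<lambda>(x, y). f x y) has_sum S) (Sigma A B)"
    by (rule has_sum_Sigma_nonneg[OF _ outer]) (use inner1 nonneg in auto)
  moreover have "((\<lambda>(x, y). f x y) has_sum S) (Sigma A B) = ((\<lambda>(y, x). f x y) has_sum S) (Sigma C D)"
    by (rule has_sum_reindex_bij_witness[where i = "\<lambda>(y, x). (x, y)" and j = "\<lambda>(x, y). (y, x)"])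
       (use eq in auto)
  ultimately have "((\<lambda>(y, x). f x y) has_sum S) (Sigma C D)" by simp
  then show ?thesis
    by (rule has_sum_SigmaD) (use inner2 in auto)
qed

definition SL :: "nat \<Rightarrow> nat \<Rightarrow> nat \<Rightarrow> nat list set" where
  "SL p a k = {xs. length xs = p \<and> sorted_wrt (<) xs \<and> set xs \<subseteq> {a<..<k}}"

definition E :: "nat \<Rightarrow> nat \<Rightarrow> nat \<Rightarrow> real" where
  "E p a k = (\<Sum>xs\<in>SL p a k. 1 / (\<Prod>x\<leftarrow>xs. real x))"

lemma finite_SL: "finite (SL p a k)"
proof -
  have "SL p a k \<subseteq> {xs. set xs \<subseteq> {a<..<k} \<and> length xs = p}" unfolding SL_def by auto
  then show ?thesis using finite_lists_length_eq[of "{a<..<k}" p] finite_subset by blast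
qed

lemma E_0: "E 0 a k = 1"
proof -
  have "SL 0 a k = {[]}" unfolding SL_def by auto
  then show ?thesis unfolding E_def by simp
qed

lemma prod_list_real_nonneg: "0 \<le> (\<Prod>x\<leftarrow>xs. real x)"
  by (induction xs) auto

lemma E_nonneg: "E p a k \<ge> 0"
  unfolding E_def by (intro sum_nonneg) (simp add: prod_list_real_nonneg)

lemma E_Suc: "E (Suc p) a k = (\<Sum>j\<in>{a<..<k}. E p j k / real j)"
proof -
  have "E (Suc p) a k = (\<Sum>(j, ys)\<in>Sigma {a<..<k} (\<lambda>j. SL p j k). 1 / (\<Prod>x\<leftarrow>j # ys. real x))"
    unfolding E_def
    by (rule sum.reindex_bij_witness[where i = "\<lambda>(j, ys). j # ys" and j = "\<lambda>xs. (hd xs, tl xs)"])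
       (auto simp: SL_def length_Suc_conv subset_iff)
  also have "\<dots> = (\<Sum>j\<in>{a<..<k}. \<Sum>ys\<in>SL p j k. 1 / (\<Prod>x\<leftarrow>j # ys. real x))"
    by (rule sum.Sigma[symmetric]) (auto simp: finite_SL)
  also have "\<dots> = (\<Sum>j\<in>{a<..<k}. E p j k / real j)"
    unfolding E_def by (simp add: sum_divide_distrib mult.commute)
  finally show ?thesis .
qed

lemma chain:
  assumes n: "n \<ge> 1"
  shows "((\<lambda>k. E p a k * ((Uop n ^^ m) (\<lambda>s. Dc s k n) r / real k)) has_sum
           (Uop n ^^ (m + p + 1)) (\<lambda>s. Dc s a n) r) {a<..}"
proof (induction p arbitrary: a m)
  case 0
  then show ?case using TA[OF n, of m r a] by (simp add: E_0)
next
  case (Suc p)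
  define W where "W k = (Uop n ^^ m) (\<lambda>s. Dc s k n) r / real k" for k
  have W_nonneg: "W k \<ge> 0" for k
    unfolding W_def by (intro divide_nonneg_nonneg Uopp_nonneg Dc_nonneg) auto
  have "((\<lambda>k. (\<Sum>j\<in>{a<..<k}. E p j k * W k / real j)) has_sum (Uop n ^^ (m + Suc p + 1)) (\<lambda>s. Dc s a n) r) {a<..}"
  proof (rule has_sum_swap_nonneg[where f = "\<lambda>j k. E p j k * W k / real j" and A = "{a<..}" and B = "\<lambda>j. {j<..}"
      and D = "\<lambda>k. {a<..<k}"])
    show "((\<lambda>k. E p j k * W k / real j) has_sum (Uop n ^^ (m + p + 1)) (\<lambda>s. Dc s j n) r / real j) {j<..}" for j
      using has_sum_divide_const[OF Suc.IH[of j m], of "real j"] unfolding W_def by simp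
    show "((\<lambda>j. (Uop n ^^ (m + p + 1)) (\<lambda>s. Dc s j n) r / real j) has_sum (Uop n ^^ (m + Suc p + 1)) (\<lambda>s. Dc s a n) r) {a<..}"
      using TA[OF n, of "m + p + 1" r a] by simp
    show "E p j k * W k / real j \<ge> 0" for j k
      using E_nonneg W_nonneg by simp
    show "((\<lambda>j. E p j k * W k / real j) has_sum (\<Sum>j\<in>{a<..<k}. E p j k * W k / real j)) {a<..<k}" for k
      by (rule has_sum_finite) simp
    show "(j \<in> {a<..} \<and> k \<in> {j<..}) \<longleftrightarrow> (k \<in> {a<..} \<and> j \<in> {a<..<k})" for j k
      by auto
  qed
  moreover have "(\<Sum>j\<in>{a<..<k}. E p j k * W k / real j) = E (Suc p) a k * W k" for k
  proof -
    have "E (Suc p) a k * W k = (\<Sum>j\<in>{a<..<k}. E p j k / real j * W k)"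
      unfolding E_Suc by (rule sum_distrib_right)
    also have "\<dots> = (\<Sum>j\<in>{a<..<k}. E p j k * W k / real j)"
      by (intro sum.cong) auto
    finally show ?thesis by simp
  qed
  ultimately show ?case unfolding W_def by simp
qed


lemma Dc0_0: "Dc 0 m 0 = 1"
  by (induction m) (simp_all add: Dc.simps)

lemma Dc0_Suc: "Dc (Suc r) m 0 = (\<Sum>x\<in>{1..m}. Dc r x 0 / real x)"
proof (induction m)
  case 0
  then show ?case by simp
next
  case (Suc m)
  have "Dc (Suc r) (Suc m) 0 = Dc (Suc r) m 0 + Dc r (Suc m) 0 / real (Suc m)"
    by (simp add: Dc.simps add_divide_distrib del: of_nat_Suc)
  then show ?case using Suc by simp
qed

definition HL :: "nat \<Rightarrow> nat \<Rightarrow> nat list set" where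
  "HL q m = {ls. length ls = q \<and> sorted ls \<and> set ls \<subseteq> {1..m}}"

lemma finite_HL: "finite (HL q m)"
proof -
  have "HL q m \<subseteq> {xs. set xs \<subseteq> {1..m} \<and> length xs = q}" unfolding HL_def by auto
  then show ?thesis using finite_lists_length_eq[of "{1..m}" q] finite_subset by blast
qed

lemma Hsum_HL: "Hsum q m = (\<Sum>ls\<in>HL q m. 1 / (\<Prod>l\<leftarrow>ls. real l))"
  unfolding Hsum_def HL_def by simp

lemma Hsum_0: "Hsum 0 m = 1"
proof -
  have "HL 0 m = {[]}" unfolding HL_def by auto
  then show ?thesis unfolding Hsum_HL by simp
qed

lemma Hsum_Suc: "Hsum (Suc r) m = (\<Sum>x\<in>{1..m}. Hsum r x / real x)"
proof -
  have "Hsum (Suc r) m = (\<Sum>(x, ls)\<in>Sigma {1..m} (\<lambda>x. HL r x). 1 / (\<Prod>l\<leftarrow>ls @ [x]. real l))"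
    unfolding Hsum_HL
    by (rule sum.reindex_bij_witness[where i = "\<lambda>(x, ls). ls @ [x]" and j = "\<lambda>xs. (last xs, butlast xs)"])
       (auto simp: HL_def length_Suc_conv_rev subset_iff sorted_append)
  also have "\<dots> = (\<Sum>x\<in>{1..m}. \<Sum>ls\<in>HL r x. 1 / (\<Prod>l\<leftarrow>ls @ [x]. real l))"
    by (rule sum.Sigma[symmetric]) (auto simp: finite_HL)
  also have "\<dots> = (\<Sum>x\<in>{1..m}. Hsum r x / real x)"
    unfolding Hsum_HL by (simp add: sum_divide_distrib)
  finally show ?thesis .
qed

lemma Hsum_Dc: "Hsum r m = Dc r m 0"
proof (induction r arbitrary: m)
  case 0
  then show ?case by (simp add: Hsum_0 Dc0_0)
next
  case (Suc r)
  then show ?case by (simp add: Hsum_Suc Dc0_Suc)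
qed

lemma zeta_has_sum:
  assumes "s \<ge> 2"
  shows "((\<lambda>n. 1 / real n ^ s) has_sum rzeta s) {0<..}"
proof (rule sums_to_has_sum_shift)
  have "summable (\<lambda>n. inverse (real n ^ s))" by (rule inverse_power_summable[OF assms])
  then have "summable (\<lambda>m. inverse (real (Suc m) ^ s))" by (subst summable_Suc_iff)
  then have "summable (\<lambda>m. 1 / real (Suc m) ^ s)" by (simp add: inverse_eq_divide)
  then show "(\<lambda>i. 1 / real (Suc (0 + i)) ^ s) sums rzeta s"
    unfolding rzeta_def by (simp add: summable_sums)
qed simp


lemma step1:
  assumes n: "n \<ge> 1"
  shows "((\<lambda>k. E p 0 k * (U q k n / real k)) has_sum real ((p + q + 1) choose q) * (1 / real n ^ (p + q + 2))) {0<..}"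
proof -
  have "((\<lambda>k. E p 0 k * ((Uop n ^^ 1) (\<lambda>s. Dc s k n) q / real k)) has_sum
           (Uop n ^^ (1 + p + 1)) (\<lambda>s. Dc s 0 n) q) {0<..}"
    by (rule chain[OF n])
  moreover have "(Uop n ^^ (1 + p + 1)) (\<lambda>s. Dc s 0 n) q = real ((p + q + 1) choose q) * (1 / real n ^ (p + q + 2))"
  proof -
    have w: "(Uop n ^^ Suc (p + 1)) (\<lambda>s. Dc s 0 n) q = real ((q + (p + 1)) choose q) / real n ^ (q + (p + 1) + 1)"
      by (rule Wfin)
    have e: "1 + p + 1 = Suc (p + 1)" "q + (p + 1) = p + q + 1" "q + (p + 1) + 1 = p + q + 2" by simp_all
    show ?thesis unfolding e w by simp
  qed
  ultimately show ?thesis unfolding U_def by simp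
qed

lemma step2: "((\<lambda>k. E p 0 k * (Dc q k 0 / real k / real k)) has_sum real ((p + q + 1) choose q) * rzeta (p + q + 2)) {0<..}"
proof (rule has_sum_swap_nonneg[where f = "\<lambda>n k. E p 0 k * (U q k n / real k)" and A = "{0<..}" and B = "\<lambda>_. {0<..}"
      and D = "\<lambda>_. {0<..}"])
  show "((\<lambda>k. E p 0 k * (U q k n / real k)) has_sum real ((p + q + 1) choose q) * (1 / real n ^ (p + q + 2))) {0<..}"
    if "n \<in> {0<..}" for n
    using step1[of n p q] that by simp
  show "((\<lambda>n. real ((p + q + 1) choose q) * (1 / real n ^ (p + q + 2))) has_sum real ((p + q + 1) choose q) * rzeta (p + q + 2)) {0<..}"
    by (rule has_sum_cmult_right) (rule zeta_has_sum, simp)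
  show "0 \<le> E p 0 k * (U q k n / real k)" for n k
    using E_nonneg U_nonneg by simp
  show "((\<lambda>n. E p 0 k * (U q k n / real k)) has_sum E p 0 k * (Dc q k 0 / real k / real k)) {0<..}"
    if "k \<in> {0<..}" for k
  proof -
    from that obtain k' where k: "k = Suc k'" by (cases k) auto
    show ?thesis unfolding k
      by (intro has_sum_cmult_right has_sum_divide_const TB)
  qed
  show "(n \<in> {0<..} \<and> k \<in> {0<..}) \<longleftrightarrow> (k \<in> {0<..} \<and> n \<in> {0<..})" for n k
    by auto
qed

lemma Gterm_app: "Gterm 0 q (xs @ [k]) = 1 / (\<Prod>x\<leftarrow>xs. real x) / (real k * real k) * Dc q k 0"
  unfolding Gterm_def by (simp add: Hsum_Dc power2_eq_square)

lemma Gsum: "(Gterm 0 q has_sum real ((p + q + 1) choose q) * rzeta (p + q + 2)) (Gidx p)"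
proof -
  let ?S = "real ((p + q + 1) choose q) * rzeta (p + q + 2)"
  have "((\<lambda>(k, xs). Gterm 0 q (xs @ [k])) has_sum ?S) (Sigma {0<..} (\<lambda>k. SL p 0 k))"
  proof (rule has_sum_Sigma_nonneg[OF _ step2])
    fix k :: nat
    have "(\<Sum>xs\<in>SL p 0 k. Gterm 0 q (xs @ [k])) = E p 0 k * (Dc q k 0 / real k / real k)"
      unfolding Gterm_app E_def sum_distrib_right
      by (intro sum.cong) simp_all
    then show "((\<lambda>xs. case (k, xs) of (k, xs) \<Rightarrow> Gterm 0 q (xs @ [k])) has_sum E p 0 k * (Dc q k 0 / real k / real k)) (SL p 0 k)"
      using has_sum_finite[OF finite_SL, of "\<lambda>xs. Gterm 0 q (xs @ [k])" p 0 k] by simp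
  next
    fix k xs
    show "0 \<le> (case (k, xs) of (k, xs) \<Rightarrow> Gterm 0 q (xs @ [k]))"
      unfolding Gterm_app using prod_list_real_nonneg[of xs] Dc_nonneg[of q k 0] by simp
  qed
  moreover have "((\<lambda>(k, xs). Gterm 0 q (xs @ [k])) has_sum ?S) (Sigma {0<..} (\<lambda>k. SL p 0 k)) = (Gterm 0 q has_sum ?S) (Gidx p)"
    apply (rule has_sum_reindex_bij_witness[where j = "\<lambda>(k, xs). xs @ [k]" and i = "\<lambda>ks. (last ks, butlast ks)"])
    apply (auto simp: Gidx_def SL_def length_Suc_conv_rev subset_iff sorted_wrt_append)
    apply (metis gr0I)
    done
  ultimately show ?thesis by simp
qed

theorem proposition2p5:
  fixes p q :: nat
  shows "Gterm 0 q summable_on Gidx p \<and>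
         G 0 p q = real ((p + q + 1) choose q) * rzeta (p + q + 2) \<and>
         (q \<ge> 1 \<longrightarrow> G 0 p q = G 0 (q - 1) (p + 1))"
proof (intro conjI impI)
  show "Gterm 0 q summable_on Gidx p" using Gsum by (rule has_sum_imp_summable)
  show G: "G 0 p q = real ((p + q + 1) choose q) * rzeta (p + q + 2)"
    unfolding G_def using Gsum by (rule infsumI)
  assume q: "q \<ge> 1"
  have G2: "G 0 (q - 1) (p + 1) = real ((q - 1 + (p + 1) + 1) choose (p + 1)) * rzeta (q - 1 + (p + 1) + 2)"
    unfolding G_def using Gsum by (rule infsumI)
  have e1: "q - 1 + (p + 1) + 1 = p + q + 1" "q - 1 + (p + 1) + 2 = p + q + 2" using q by auto
  have e2: "(p + q + 1) choose (p + 1) = (p + q + 1) choose q"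
    using binomial_symmetric[of q "p + q + 1"] by (simp add: add.commute)
  show "G 0 p q = G 0 (q - 1) (p + 1)" unfolding G G2 e1 e2 ..
qed

end
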